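(* Let $G$ be a trigraph and $\Gamma\subseteq\operatorname{Aut}(G)$ a group of automorphisms. For every vertex $v\in V(G)$, $\deg_{G/\Gamma}(v^\Gamma)\leq\deg_G(v)$. In particular, $\Delta(G/\Gamma)\leq\Delta(G)$.
   Context: A trigraph is a finite simple graph whose edges are each colored red or black. $\operatorname{Aut}(G)$ is the automorphism group of the underlying simple graph of $G$ (automorphisms need not preserve edge colors). For $v\in V(G)$, $v^\Gamma$ is the orbit of $v$ under $\Gamma$. For a partition $\mathcal{P}$ of $V(G)$, the quotient trigraph $G/\mathcal{P}$ has vertex set $\mathcal{P}$; two distinct parts $U,W$ are joined by a black edge if every pair $\{u,w\}$ with $u\in U,w\in W$ is a black edge of $G$, are non-adjacent if no such pair is an edge, and are joined by a red edge otherwise. $G/\Gamma$ denotes $G/\mathcal{P}$ for $\mathcal{P}$ the partition of $V(G)$ into $\Gamma$-orbits. Degrees count edges of both colors; $\Delta$ denotes maximum degree. *)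

theory Defs
  imports Main "HOL-Algebra.Bij"
begin

type_synonym 'a trigraph = "'a set \<times> 'a set set \<times> 'a set set"

definition tverts :: "'a trigraph \<Rightarrow> 'a set" where
  "tverts G = fst G"

definition black :: "'a trigraph \<Rightarrow> 'a set set" where
  "black G = fst (snd G)"

definition red :: "'a trigraph \<Rightarrow> 'a set set" where
  "red G = snd (snd G)"

definition tedges :: "'a trigraph \<Rightarrow> 'a set set" where
  "tedges G = black G \<union> red G"

definition trigraph :: "'a trigraph \<Rightarrow> bool" where
  "trigraph G \<longleftrightarrow> finite (tverts G)
     \<and> (\<forall>e \<in> tedges G. \<exists>u v. u \<in> tverts G \<and> v \<in> tverts G \<and> u \<noteq> v \<and> e = {u, v})
     \<and> black G \<inter> red G = {}"

definition tdeg :: "'a trigraph \<Rightarrow> 'a \<Rightarrow> nat" where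
  "tdeg G v = card {w \<in> tverts G. {v, w} \<in> tedges G}"

text \<open>Maximum degree (0 for the empty trigraph).\<close>
definition maxdeg :: "'a trigraph \<Rightarrow> nat" where
  "maxdeg G = Sup (tdeg G ` tverts G)"

text \<open>Automorphisms of the underlying simple graph (colours ignored), as
  extensional bijections of the vertex set, so they live in the carrier of
  the symmetric group BijGroup (tverts G).\<close>
definition Aut :: "'a trigraph \<Rightarrow> ('a \<Rightarrow> 'a) set" where
  "Aut G = {f \<in> Bij (tverts G). \<forall>u \<in> tverts G. \<forall>w \<in> tverts G.
              {u, w} \<in> tedges G \<longleftrightarrow> {f u, f w} \<in> tedges G}"

definition orbit :: "('a \<Rightarrow> 'a) set \<Rightarrow> 'a \<Rightarrow> 'a set" where
  "orbit \<Gamma> v = {f v | f. f \<in> \<Gamma>}"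

definition quotient :: "'a trigraph \<Rightarrow> 'a set set \<Rightarrow> 'a set trigraph" where
  "quotient G P =
    (P,
     {{U, W} | U W. U \<in> P \<and> W \<in> P \<and> U \<noteq> W \<and>
        (\<forall>u \<in> U. \<forall>w \<in> W. {u, w} \<in> black G)},
     {{U, W} | U W. U \<in> P \<and> W \<in> P \<and> U \<noteq> W \<and>
        (\<exists>u \<in> U. \<exists>w \<in> W. {u, w} \<in> tedges G) \<and>
        \<not> (\<forall>u \<in> U. \<forall>w \<in> W. {u, w} \<in> black G)})"

definition orbit_quotient :: "'a trigraph \<Rightarrow> ('a \<Rightarrow> 'a) set \<Rightarrow> 'a set trigraph" where
  "orbit_quotient G \<Gamma> = quotient G (orbit \<Gamma> ` tverts G)"

end

theory Submission
  imports Defs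
begin

lemma BG_mult: "f \<in> Bij S \<Longrightarrow> g \<in> Bij S \<Longrightarrow> f \<otimes>\<^bsub>BijGroup S\<^esub> g = compose S f g"
  by (simp add: BijGroup_def)

lemma BG_carrier: "carrier (BijGroup S) = Bij S"
  by (simp add: BijGroup_def)

lemma BG_one: "\<one>\<^bsub>BijGroup S\<^esub> = (\<lambda>x\<in>S. x)"
  by (simp add: BijGroup_def)

lemma Bij_mem: "f \<in> Bij S \<Longrightarrow> x \<in> S \<Longrightarrow> f x \<in> S"
  by (rule funcset_mem[OF Bij_imp_funcset])

lemma orbit_self:
  assumes "subgroup \<Gamma> (BijGroup S)" "x \<in> S"
  shows "x \<in> orbit \<Gamma> x"
proof -
  have "(\<lambda>x\<in>S. x) \<in> \<Gamma>" using subgroup.one_closed[OF assms(1)] by (simp add: BG_one)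
  then show ?thesis using assms(2) unfolding orbit_def by (intro CollectI exI[of _ "\<lambda>x\<in>S. x"]) auto
qed

lemma orbit_move:
  assumes sg: "subgroup \<Gamma> (BijGroup S)" and x: "x \<in> S" and g: "g \<in> \<Gamma>"
  shows "orbit \<Gamma> (g x) = orbit \<Gamma> x"
proof
  show "orbit \<Gamma> (g x) \<subseteq> orbit \<Gamma> x"
  proof
    fix y assume "y \<in> orbit \<Gamma> (g x)"
    then obtain f where f: "f \<in> \<Gamma>" "y = f (g x)" unfolding orbit_def by blast
    have "f \<otimes>\<^bsub>BijGroup S\<^esub> g \<in> \<Gamma>" using subgroup.m_closed[OF sg f(1) g] .
    moreover have "(f \<otimes>\<^bsub>BijGroup S\<^esub> g) x = y" using x f g subgroup.subset[OF sg] by (simp add: BG_mult BG_carrier compose_def subset_iff)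
    ultimately show "y \<in> orbit \<Gamma> x" unfolding orbit_def by blast
  qed
next
  show "orbit \<Gamma> x \<subseteq> orbit \<Gamma> (g x)"
  proof
    fix y assume "y \<in> orbit \<Gamma> x"
    then obtain f where f: "f \<in> \<Gamma>" "y = f x" unfolding orbit_def by blast
    have gB: "g \<in> Bij S" using subgroup.subset[OF sg] g by (auto simp: BG_carrier)
    have gx: "g x \<in> S" using Bij_mem[OF gB x] .
    have ig: "inv\<^bsub>BijGroup S\<^esub> g \<in> \<Gamma>" using subgroup.m_inv_closed[OF sg g] .
    have igx: "(inv\<^bsub>BijGroup S\<^esub> g) (g x) = x"
      using gB x gx by (simp add: inv_BijGroup Bij_def bij_betw_def inv_into_f_f)
    have "f \<otimes>\<^bsub>BijGroup S\<^esub> inv\<^bsub>BijGroup S\<^esub> g \<in> \<Gamma>" using subgroup.m_closed[OF sg f(1) ig] .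
    moreover have "(f \<otimes>\<^bsub>BijGroup S\<^esub> inv\<^bsub>BijGroup S\<^esub> g) (g x) = y"
      using gx igx f ig subgroup.subset[OF sg] by (simp add: BG_mult BG_carrier compose_def subset_iff)
    ultimately show "y \<in> orbit \<Gamma> (g x)" unfolding orbit_def by blast
  qed
qed

lemma pair_edge:
  assumes "{U, W} = {U', W'}" "a \<in> U'" "b \<in> W'" "{a, b} \<in> E"
  shows "\<exists>u\<in>U. \<exists>w\<in>W. {u, w} \<in> E"
proof -
  have "(U = U' \<and> W = W') \<or> (U = W' \<and> W = U')" using assms(1) by (simp add: doubleton_eq_iff)
  then show ?thesis
  proof
    assume "U = U' \<and> W = W'" then show ?thesis using assms(2-4) by blast
  next
    assume h: "U = W' \<and> W = U'"
    have "{b, a} \<in> E" using assms(4) by (simp only: insert_commute)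
    then show ?thesis using h assms(2,3) by blast
  qed
qed

lemma black_quot: "black (quotient G P) = {{U, W} | U W. U \<in> P \<and> W \<in> P \<and> U \<noteq> W \<and>
        (\<forall>u \<in> U. \<forall>w \<in> W. {u, w} \<in> black G)}"
  unfolding quotient_def black_def[of "(_, _, _)"] by (simp only: fst_conv snd_conv)

lemma red_quot: "red (quotient G P) = {{U, W} | U W. U \<in> P \<and> W \<in> P \<and> U \<noteq> W \<and>
        (\<exists>u \<in> U. \<exists>w \<in> W. {u, w} \<in> tedges G) \<and>
        \<not> (\<forall>u \<in> U. \<forall>w \<in> W. {u, w} \<in> black G)}"
  unfolding quotient_def red_def[of "(_, _, _)"] by (simp only: fst_conv snd_conv)

lemma quot_edge:
  assumes "{U, W} \<in> tedges (quotient G P)" and ne: "\<forall>X\<in>P. X \<noteq> {}"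
  shows "\<exists>u\<in>U. \<exists>w\<in>W. {u, w} \<in> tedges G"
proof -
  have "{U, W} \<in> black (quotient G P) \<or> {U, W} \<in> red (quotient G P)"
    using assms(1) unfolding tedges_def[of "quotient G P"] by blast
  then show ?thesis
  proof
    assume "{U, W} \<in> black (quotient G P)"
    then have "{U, W} \<in> {{U, W} | U W. U \<in> P \<and> W \<in> P \<and> U \<noteq> W \<and>
        (\<forall>u \<in> U. \<forall>w \<in> W. {u, w} \<in> black G)}"
      unfolding black_quot .
    then obtain U' W' where h: "{U, W} = {U', W'}" "U' \<in> P" "W' \<in> P"
        "\<forall>u \<in> U'. \<forall>w \<in> W'. {u, w} \<in> black G"
      unfolding mem_Collect_eq by (elim exE conjE) (rule that)
    obtain a where a: "a \<in> U'" using ne h(2) by (meson ex_in_conv)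
    obtain b where b: "b \<in> W'" using ne h(3) by (meson ex_in_conv)
    have "{a, b} \<in> black G" using h(4) a b by simp
    then have "{a, b} \<in> tedges G" unfolding tedges_def by (rule UnI1)
    then show ?thesis using pair_edge[OF h(1) a b] by blast
  next
    assume "{U, W} \<in> red (quotient G P)"
    then have "{U, W} \<in> {{U, W} | U W. U \<in> P \<and> W \<in> P \<and> U \<noteq> W \<and>
        (\<exists>u \<in> U. \<exists>w \<in> W. {u, w} \<in> tedges G) \<and>
        \<not> (\<forall>u \<in> U. \<forall>w \<in> W. {u, w} \<in> black G)}"
      unfolding red_quot .
    then obtain U' W' where h0: "{U, W} = {U', W'}" "\<exists>u \<in> U'. \<exists>w \<in> W'. {u, w} \<in> tedges G"
      unfolding mem_Collect_eq by (elim exE conjE) (rule that)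
    then obtain a b where h: "a \<in> U'" "b \<in> W'" "{a, b} \<in> tedges G" by (elim bexE)
    have h: "{U, W} = {U', W'}" "a \<in> U'" "b \<in> W'" "{a, b} \<in> tedges G" using h0(1) h by auto
    show ?thesis using pair_edge[OF h] .
  qed
qed

theorem mainTheorem13:
  fixes G :: "'a trigraph" and \<Gamma> :: "('a \<Rightarrow> 'a) set"
  assumes "trigraph G"
    and "subgroup \<Gamma> (BijGroup (tverts G))"
    and "\<Gamma> \<subseteq> Aut G"
  shows "(\<forall>v \<in> tverts G. tdeg (orbit_quotient G \<Gamma>) (orbit \<Gamma> v) \<le> tdeg G v)
         \<and> maxdeg (orbit_quotient G \<Gamma>) \<le> maxdeg G"
proof -
  define V where "V = tverts G"
  define Q where "Q = orbit_quotient G \<Gamma>"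
  have sg: "subgroup \<Gamma> (BijGroup V)" using assms(2) by (simp add: V_def)
  have finV: "finite V" using assms(1) by (simp add: trigraph_def V_def)
  have QV: "tverts Q = orbit \<Gamma> ` V"
    by (simp add: Q_def orbit_quotient_def quotient_def tverts_def V_def)
  have ne: "\<forall>X\<in>orbit \<Gamma> ` V. X \<noteq> {}" using orbit_self[OF sg] by blast
  have GB: "\<And>g. g \<in> \<Gamma> \<Longrightarrow> g \<in> Bij V" using subgroup.subset[OF sg] by (auto simp: BG_carrier)
  have GA: "\<And>g u w. g \<in> \<Gamma> \<Longrightarrow> u \<in> V \<Longrightarrow> w \<in> V \<Longrightarrow>
      {u, w} \<in> tedges G \<longleftrightarrow> {g u, g w} \<in> tedges G"
    using assms(3) unfolding Aut_def V_def by blast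
  have deg: "tdeg Q (orbit \<Gamma> v) \<le> tdeg G v" if v: "v \<in> V" for v
  proof -
    let ?N = "{w \<in> V. {v, w} \<in> tedges G}"
    have sub: "{W \<in> tverts Q. {orbit \<Gamma> v, W} \<in> tedges Q} \<subseteq> orbit \<Gamma> ` ?N"
    proof
      fix W assume W: "W \<in> {W \<in> tverts Q. {orbit \<Gamma> v, W} \<in> tedges Q}"
      then obtain x where x: "x \<in> V" "W = orbit \<Gamma> x" using QV by auto
      have "{orbit \<Gamma> v, W} \<in> tedges (quotient G (orbit \<Gamma> ` V))"
        using W by (simp add: Q_def orbit_quotient_def V_def)
      from quot_edge[OF this ne] obtain u w where uw: "u \<in> orbit \<Gamma> v" "w \<in> W" "{u, w} \<in> tedges G"
        by blast
      obtain f where f: "f \<in> \<Gamma>" "u = f v" using uw(1) unfolding orbit_def by blast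
      obtain g where g: "g \<in> \<Gamma>" "w = g x" using uw(2) x(2) unfolding orbit_def by blast
      let ?h = "inv\<^bsub>BijGroup V\<^esub> f"
      have h: "?h \<in> \<Gamma>" using subgroup.m_inv_closed[OF sg f(1)] .
      have fB: "f \<in> Bij V" using GB f(1) .
      have uV: "u \<in> V" using Bij_mem[OF fB v] f(2) by simp
      have wV: "w \<in> V" using Bij_mem[OF GB[OF g(1)] x(1)] g(2) by simp
      have hu: "?h u = v"
        using fB v uV f(2) by (simp add: inv_BijGroup Bij_def bij_betw_def inv_into_f_f)
      have hwV: "?h w \<in> V" using Bij_mem[OF GB[OF h] wV] .
      have e: "{v, ?h w} \<in> tedges G" using GA[OF h uV wV] uw(3) hu by metis
      have "orbit \<Gamma> (?h w) = orbit \<Gamma> w" using orbit_move[OF sg wV h] .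
      also have "\<dots> = W" using orbit_move[OF sg x(1) g(1)] g(2) x(2) by simp
      finally have oW: "W = orbit \<Gamma> (?h w)" by (rule sym)
      show "W \<in> orbit \<Gamma> ` ?N"
        by (rule image_eqI[where f="orbit \<Gamma>" and x="?h w", OF oW]) (use e hwV in simp)
    qed
    have "tdeg Q (orbit \<Gamma> v) \<le> card (orbit \<Gamma> ` ?N)"
      unfolding tdeg_def using sub finV by (intro card_mono) auto
    also have "\<dots> \<le> card ?N" using finV by (intro card_image_le) auto
    finally show ?thesis by (simp add: tdeg_def V_def)
  qed
  have md: "maxdeg Q \<le> maxdeg G"
  proof (cases "V = {}")
    case True
    then have "tverts Q = {}" using QV by simp
    then show ?thesis by (simp add: maxdeg_def)
  next
    case False
    have "maxdeg Q = Sup (tdeg Q ` orbit \<Gamma> ` V)" unfolding maxdeg_def QV ..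
    also have "\<dots> \<le> Sup (tdeg G ` V)"
    proof (rule cSup_least)
      show "tdeg Q ` orbit \<Gamma> ` V \<noteq> {}" using False by blast
    next
      fix d assume "d \<in> tdeg Q ` orbit \<Gamma> ` V"
      then obtain v where v: "v \<in> V" "d = tdeg Q (orbit \<Gamma> v)" by blast
      have "tdeg G v \<le> Sup (tdeg G ` V)"
        by (rule cSup_upper[OF imageI[OF v(1)] bdd_above_finite[OF finite_imageI[OF finV]]])
      then show "d \<le> Sup (tdeg G ` V)" using deg[OF v(1)] v(2) by linarith
    qed
    finally show ?thesis unfolding maxdeg_def V_def .
  qed
  have d1: "\<forall>v \<in> tverts G. tdeg (orbit_quotient G \<Gamma>) (orbit \<Gamma> v) \<le> tdeg G v"
    using deg unfolding Q_def V_def by blast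
  have d2: "maxdeg (orbit_quotient G \<Gamma>) \<le> maxdeg G" using md unfolding Q_def .
  show ?thesis using d1 d2 by (rule conjI)
qed

end
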